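(* Let $(X,Y)\sim H$ with marginal distribution functions $F$ (of $X$) and $G$ (of $Y$). Then $(X,Y)$ is quasi-independent if and only if $$\mathbb P(X\in A,Y\in B)+\mathbb P(X\in B,Y\in A)=\mathbb P(X\in A)\mathbb P(Y\in B)+\mathbb P(X\in B)\mathbb P(Y\in A)$$ for all Borel sets $A,B\subseteq\mathbb R$.
   Context: $(X,Y)$ is quasi-independent if $\frac{H(x,y)+H(y,x)}{2}=\frac12F(x)G(y)+\frac12F(y)G(x)$ for all $x,y\in\mathbb R$, where $H$ is the joint distribution function. *)

theory Defs
  imports "HOL-Probability.Probability"
begin

definition joint_cdf :: "'a measure \<Rightarrow> ('a \<Rightarrow> real) \<Rightarrow> ('a \<Rightarrow> real) \<Rightarrow> real \<Rightarrow> real \<Rightarrow> real" where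
  "joint_cdf M X Y x y = measure M {\<omega> \<in> space M. X \<omega> \<le> x \<and> Y \<omega> \<le> y}"

definition marg_cdf :: "'a measure \<Rightarrow> ('a \<Rightarrow> real) \<Rightarrow> real \<Rightarrow> real" where
  "marg_cdf M X x = measure M {\<omega> \<in> space M. X \<omega> \<le> x}"

definition quasi_independent :: "'a measure \<Rightarrow> ('a \<Rightarrow> real) \<Rightarrow> ('a \<Rightarrow> real) \<Rightarrow> bool" where
  "quasi_independent M X Y \<longleftrightarrow>
     (\<forall>x y. (joint_cdf M X Y x y + joint_cdf M X Y y x) / 2 =
            marg_cdf M X x * marg_cdf M Y y / 2 + marg_cdf M X y * marg_cdf M Y x / 2)"

end

theory Submission
  imports Defs
begin

lemma borel_set_induct_atMost[consumes 1, case_names empty atMost compl union]: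
  assumes "A \<in> sets borel"
  assumes empty: "P {}" and int: "\<And>a. P {..a}" and compl: "\<And>A. A \<in> sets borel \<Longrightarrow> P A \<Longrightarrow> P (-A)" and
          un: "\<And>f. disjoint_family f \<Longrightarrow> (\<And>i. f i \<in> sets borel) \<Longrightarrow>  (\<And>i. P (f i)) \<Longrightarrow> P (\<Union>i::nat. f i)"
  shows "P (A::real set)"
proof -
  let ?G = "range (\<lambda>a. {..a::real})"
  have "Int_stable ?G" "?G \<subseteq> Pow UNIV" "A \<in> sigma_sets UNIV ?G"
      using assms(1) by (auto simp add: borel_eq_atMost Int_stable_def)
  thus ?thesis
  proof (induction rule: sigma_sets_induct_disjoint)
    case (union f)
      from union.hyps(2) have "\<And>i. f i \<in> sets borel" by (auto simp: borel_eq_atMost)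
      with union show ?case by (auto intro: un)
  next
    case (basic A)
    then show ?case using int by auto
  qed (auto intro: empty compl simp: Compl_eq_Diff_UNIV[symmetric] borel_eq_atMost)
qed

definition QQ :: "'a measure \<Rightarrow> ('a \<Rightarrow> real) \<Rightarrow> ('a \<Rightarrow> real) \<Rightarrow> real set \<Rightarrow> real set \<Rightarrow> bool" where
  "QQ M X Y A B \<longleftrightarrow>
       measure M {\<omega> \<in> space M. X \<omega> \<in> A \<and> Y \<omega> \<in> B}
     + measure M {\<omega> \<in> space M. X \<omega> \<in> B \<and> Y \<omega> \<in> A}
     = measure M {\<omega> \<in> space M. X \<omega> \<in> A} * measure M {\<omega> \<in> space M. Y \<omega> \<in> B}
     + measure M {\<omega> \<in> space M. X \<omega> \<in> B} * measure M {\<omega> \<in> space M. Y \<omega> \<in> A}"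

lemma QQ_sym: "QQ M X Y A B \<longleftrightarrow> QQ M X Y B A"
  unfolding QQ_def by (auto simp: algebra_simps)

lemma QQ_extend:
  assumes P: "prob_space M"
    and Xm[measurable]: "X \<in> borel_measurable M" and Ym[measurable]: "Y \<in> borel_measurable M"
    and Bb[measurable]: "B \<in> sets borel"
    and gen: "\<And>a. QQ M X Y {..a} B"
    and Ab: "A \<in> sets borel"
  shows "QQ M X Y A B"
  using Ab
proof (induction rule: borel_set_induct_atMost)
  case empty
  then show ?case by (simp add: QQ_def)
next
  case (atMost a)
  then show ?case using gen by simp
next
  case (compl A)
  interpret prob_space M by fact
  note [measurable] = compl(1)
  let ?S = "\<lambda>P. measure M {\<omega> \<in> space M. P \<omega>}"
  have 1: "?S (\<lambda>\<omega>. X \<omega> \<in> -A \<and> Y \<omega> \<in> B) = ?S (\<lambda>\<omega>. Y \<omega> \<in> B) - ?S (\<lambda>\<omega>. X \<omega> \<in> A \<and> Y \<omega> \<in> B)"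
    by (subst finite_measure_Diff[symmetric]) (auto intro!: arg_cong[where f="measure M"])
  have 2: "?S (\<lambda>\<omega>. X \<omega> \<in> B \<and> Y \<omega> \<in> -A) = ?S (\<lambda>\<omega>. X \<omega> \<in> B) - ?S (\<lambda>\<omega>. X \<omega> \<in> B \<and> Y \<omega> \<in> A)"
    by (subst finite_measure_Diff[symmetric]) (auto intro!: arg_cong[where f="measure M"])
  have 3: "?S (\<lambda>\<omega>. X \<omega> \<in> -A) = 1 - ?S (\<lambda>\<omega>. X \<omega> \<in> A)"
    by (subst prob_compl[symmetric]) (auto intro!: arg_cong[where f="measure M"])
  have 4: "?S (\<lambda>\<omega>. Y \<omega> \<in> -A) = 1 - ?S (\<lambda>\<omega>. Y \<omega> \<in> A)"
    by (subst prob_compl[symmetric]) (auto intro!: arg_cong[where f="measure M"])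
  show ?case using compl(2) unfolding QQ_def 1 2 3 4 by (simp add: algebra_simps)
next
  case (union f)
  interpret prob_space M by fact
  note [measurable] = union(2)
  let ?S = "\<lambda>P. measure M {\<omega> \<in> space M. P \<omega>}"
  have s1: "(\<lambda>i. ?S (\<lambda>\<omega>. X \<omega> \<in> f i \<and> Y \<omega> \<in> B)) sums ?S (\<lambda>\<omega>. X \<omega> \<in> (\<Union>i. f i) \<and> Y \<omega> \<in> B)"
  proof -
    have "(\<lambda>i. ?S (\<lambda>\<omega>. X \<omega> \<in> f i \<and> Y \<omega> \<in> B)) sums measure M (\<Union>i. {\<omega> \<in> space M. X \<omega> \<in> f i \<and> Y \<omega> \<in> B})"
      using union(1) by (intro finite_measure_UNION) (auto simp: disjoint_family_on_def)
    moreover have "(\<Union>i. {\<omega> \<in> space M. X \<omega> \<in> f i \<and> Y \<omega> \<in> B}) = {\<omega> \<in> space M. X \<omega> \<in> (\<Union>i. f i) \<and> Y \<omega> \<in> B}"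
      by auto
    ultimately show ?thesis by simp
  qed
  have s2: "(\<lambda>i. ?S (\<lambda>\<omega>. X \<omega> \<in> B \<and> Y \<omega> \<in> f i)) sums ?S (\<lambda>\<omega>. X \<omega> \<in> B \<and> Y \<omega> \<in> (\<Union>i. f i))"
  proof -
    have "(\<lambda>i. ?S (\<lambda>\<omega>. X \<omega> \<in> B \<and> Y \<omega> \<in> f i)) sums measure M (\<Union>i. {\<omega> \<in> space M. X \<omega> \<in> B \<and> Y \<omega> \<in> f i})"
      using union(1) by (intro finite_measure_UNION) (auto simp: disjoint_family_on_def)
    moreover have "(\<Union>i. {\<omega> \<in> space M. X \<omega> \<in> B \<and> Y \<omega> \<in> f i}) = {\<omega> \<in> space M. X \<omega> \<in> B \<and> Y \<omega> \<in> (\<Union>i. f i)}"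
      by auto
    ultimately show ?thesis by simp
  qed
  have s3: "(\<lambda>i. ?S (\<lambda>\<omega>. X \<omega> \<in> f i)) sums ?S (\<lambda>\<omega>. X \<omega> \<in> (\<Union>i. f i))"
  proof -
    have "(\<lambda>i. ?S (\<lambda>\<omega>. X \<omega> \<in> f i)) sums measure M (\<Union>i. {\<omega> \<in> space M. X \<omega> \<in> f i})"
      using union(1) by (intro finite_measure_UNION) (auto simp: disjoint_family_on_def)
    moreover have "(\<Union>i. {\<omega> \<in> space M. X \<omega> \<in> f i}) = {\<omega> \<in> space M. X \<omega> \<in> (\<Union>i. f i)}"
      by auto
    ultimately show ?thesis by simp
  qed
  have s4: "(\<lambda>i. ?S (\<lambda>\<omega>. Y \<omega> \<in> f i)) sums ?S (\<lambda>\<omega>. Y \<omega> \<in> (\<Union>i. f i))"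
  proof -
    have "(\<lambda>i. ?S (\<lambda>\<omega>. Y \<omega> \<in> f i)) sums measure M (\<Union>i. {\<omega> \<in> space M. Y \<omega> \<in> f i})"
      using union(1) by (intro finite_measure_UNION) (auto simp: disjoint_family_on_def)
    moreover have "(\<Union>i. {\<omega> \<in> space M. Y \<omega> \<in> f i}) = {\<omega> \<in> space M. Y \<omega> \<in> (\<Union>i. f i)}"
      by auto
    ultimately show ?thesis by simp
  qed
  have L: "(\<lambda>i. ?S (\<lambda>\<omega>. X \<omega> \<in> f i \<and> Y \<omega> \<in> B) + ?S (\<lambda>\<omega>. X \<omega> \<in> B \<and> Y \<omega> \<in> f i)) sums
     (?S (\<lambda>\<omega>. X \<omega> \<in> (\<Union>i. f i) \<and> Y \<omega> \<in> B) + ?S (\<lambda>\<omega>. X \<omega> \<in> B \<and> Y \<omega> \<in> (\<Union>i. f i)))"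
    by (intro sums_add s1 s2)
  have R: "(\<lambda>i. ?S (\<lambda>\<omega>. X \<omega> \<in> f i) * ?S (\<lambda>\<omega>. Y \<omega> \<in> B) + ?S (\<lambda>\<omega>. X \<omega> \<in> B) * ?S (\<lambda>\<omega>. Y \<omega> \<in> f i)) sums
     (?S (\<lambda>\<omega>. X \<omega> \<in> (\<Union>i. f i)) * ?S (\<lambda>\<omega>. Y \<omega> \<in> B) + ?S (\<lambda>\<omega>. X \<omega> \<in> B) * ?S (\<lambda>\<omega>. Y \<omega> \<in> (\<Union>i. f i)))"
    by (intro sums_add sums_mult sums_mult2 s3 s4)
  have "(\<lambda>i. ?S (\<lambda>\<omega>. X \<omega> \<in> f i \<and> Y \<omega> \<in> B) + ?S (\<lambda>\<omega>. X \<omega> \<in> B \<and> Y \<omega> \<in> f i)) =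
        (\<lambda>i. ?S (\<lambda>\<omega>. X \<omega> \<in> f i) * ?S (\<lambda>\<omega>. Y \<omega> \<in> B) + ?S (\<lambda>\<omega>. X \<omega> \<in> B) * ?S (\<lambda>\<omega>. Y \<omega> \<in> f i))"
    using union(3) unfolding QQ_def by (intro ext) blast
  from L[unfolded this] R have "?S (\<lambda>\<omega>. X \<omega> \<in> (\<Union>i. f i) \<and> Y \<omega> \<in> B) + ?S (\<lambda>\<omega>. X \<omega> \<in> B \<and> Y \<omega> \<in> (\<Union>i. f i)) =
     ?S (\<lambda>\<omega>. X \<omega> \<in> (\<Union>i. f i)) * ?S (\<lambda>\<omega>. Y \<omega> \<in> B) + ?S (\<lambda>\<omega>. X \<omega> \<in> B) * ?S (\<lambda>\<omega>. Y \<omega> \<in> (\<Union>i. f i))"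
    by (rule sums_unique2)
  then show ?case unfolding QQ_def .
qed

theorem lemma1:
  fixes M :: "'a measure" and X Y :: "'a \<Rightarrow> real"
  assumes "prob_space M"
    and "X \<in> borel_measurable M" and "Y \<in> borel_measurable M"
  shows "quasi_independent M X Y \<longleftrightarrow>
    (\<forall>A \<in> sets borel. \<forall>B \<in> sets borel.
       measure M {\<omega> \<in> space M. X \<omega> \<in> A \<and> Y \<omega> \<in> B}
     + measure M {\<omega> \<in> space M. X \<omega> \<in> B \<and> Y \<omega> \<in> A}
     = measure M {\<omega> \<in> space M. X \<omega> \<in> A} * measure M {\<omega> \<in> space M. Y \<omega> \<in> B}
     + measure M {\<omega> \<in> space M. X \<omega> \<in> B} * measure M {\<omega> \<in> space M. Y \<omega> \<in> A})"
    (is "?L \<longleftrightarrow> ?R")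
proof
  assume ?L
  have gen: "QQ M X Y {..a} {..b}" for a b
  proof -
    have "(joint_cdf M X Y a b + joint_cdf M X Y b a) / 2 =
            marg_cdf M X a * marg_cdf M Y b / 2 + marg_cdf M X b * marg_cdf M Y a / 2"
      using \<open>?L\<close> unfolding quasi_independent_def by blast
    then show ?thesis unfolding QQ_def joint_cdf_def marg_cdf_def by (simp add: field_simps)
  qed
  have st1: "QQ M X Y A {..b}" if "A \<in> sets borel" for A b
    using QQ_extend[OF assms _ gen that] by simp
  have "QQ M X Y A B" if "A \<in> sets borel" "B \<in> sets borel" for A B
  proof -
    have "QQ M X Y B A"
      using QQ_extend[OF assms that(1), of B] st1[OF that(1)] that(2) by (simp add: QQ_sym)
    then show ?thesis by (simp add: QQ_sym)
  qed
  then show ?R unfolding QQ_def by blast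
next
  assume ?R
  show ?L unfolding quasi_independent_def joint_cdf_def marg_cdf_def
  proof (intro allI)
    fix x y :: real
    have "QQ M X Y {..x} {..y}" unfolding QQ_def
      by (rule \<open>?R\<close>[rule_format]) auto
    then show "(measure M {\<omega> \<in> space M. X \<omega> \<le> x \<and> Y \<omega> \<le> y} + measure M {\<omega> \<in> space M. X \<omega> \<le> y \<and> Y \<omega> \<le> x}) / 2 =
          measure M {\<omega> \<in> space M. X \<omega> \<le> x} * measure M {\<omega> \<in> space M. Y \<omega> \<le> y} / 2 +
          measure M {\<omega> \<in> space M. X \<omega> \<le> y} * measure M {\<omega> \<in> space M. Y \<omega> \<le> x} / 2"
      unfolding QQ_def by (simp add: field_simps)
  qed
qed

end
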